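(* Let $b\ge0$, $M>0$ and $0\le\alpha<1$. Let $p(z)=1+c_1z+c_2z^2+\cdots$ be analytic in $\mathbb{D}$ with $|c_1|=2b$ and $|c_n|\le2M$ for all $n\ge2$. Put \[r_0=r_0(\alpha)=\frac{2(1-\alpha)}{1-\alpha+2b+\sqrt{(1-\alpha+2b)^2+8(1-\alpha)(M-b)}}.\] Then $|p(z)-1|\le1-\alpha$ for $|z|\le r_0$, and $\operatorname{Re}p(z)>\alpha$ for $|z|<r_0$. These results are sharp: the function $p_0(z)=1-2bz-2M\frac{z^2}{1-z}$ satisfies the hypotheses and $p_0(r_0)=\alpha$, so that $|p_0(r_0)-1|=1-\alpha$.
   Context: $\mathbb{D}=\{z\in\mathbb{C}:|z|<1\}$. *)

theory Defs
  imports "HOL-Analysis.Analysis"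
begin

definition r0 :: "real \<Rightarrow> real \<Rightarrow> real \<Rightarrow> real" where
  "r0 b M \<alpha> = 2 * (1 - \<alpha>) /
     (1 - \<alpha> + 2 * b + sqrt ((1 - \<alpha> + 2 * b)\<^sup>2 + 8 * (1 - \<alpha>) * (M - b)))"

definition p0 :: "real \<Rightarrow> real \<Rightarrow> complex \<Rightarrow> complex" where
  "p0 b M z = 1 - 2 * of_real b * z - 2 * of_real M * z\<^sup>2 / (1 - z)"

end

theory Submission
  imports Defs
begin

lemma r0_facts:
  fixes b M \<alpha> :: real
  assumes "b \<ge> 0" "M > 0" "\<alpha> < 1"
  shows "0 < r0 b M \<alpha> \<and> r0 b M \<alpha> < 1 \<and>
    2*(M-b)*(r0 b M \<alpha>)^2 + (1-\<alpha>+2*b)*r0 b M \<alpha> - (1-\<alpha>) = 0"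
proof -
  define A where "A = 1-\<alpha>+2*b"
  define Q where "Q = A^2 + 8*(1-\<alpha>)*(M-b)"
  define S where "S = sqrt Q"
  have Qe: "Q = (1-\<alpha>-2*b)^2 + 8*(1-\<alpha>)*M" unfolding Q_def A_def by (simp add: power2_eq_square algebra_simps)
  have Qpos: "Q > (1-\<alpha>-2*b)^2" using Qe assms by (simp add: mult_pos_pos)
  hence Qp: "Q > 0" by (smt (verit) zero_le_power2)
  have S2: "S^2 = Q" unfolding S_def using Qp by (metis less_imp_le real_sqrt_pow2)
  have S0: "S \<ge> 0" unfolding S_def using Qp by simp
  have "\<bar>1-\<alpha>-2*b\<bar> < S" unfolding S_def using Qpos
    by (metis real_sqrt_abs real_sqrt_less_iff)
  hence SA: "A + S > 2*(1-\<alpha>)" unfolding A_def by (simp add: abs_less_iff)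
  have Ap: "A > 0" unfolding A_def using assms by simp
  have r: "r0 b M \<alpha> = 2*(1-\<alpha>)/(A+S)" unfolding r0_def A_def S_def Q_def by simp
  have pos: "A + S > 0" using Ap S0 by simp
  have "0 < r0 b M \<alpha>" unfolding r using pos assms by simp
  moreover have "r0 b M \<alpha> < 1" unfolding r using pos SA by simp
  moreover have "2*(M-b)*(r0 b M \<alpha>)^2 + A*r0 b M \<alpha> - (1-\<alpha>) = 0"
  proof -
    have "2*(M-b)*(2*(1-\<alpha>))^2 + A*(2*(1-\<alpha>))*(A+S) - (1-\<alpha>)*(A+S)^2
       = (1-\<alpha>)*(8*(M-b)*(1-\<alpha>) + A^2 - S^2)" by (simp add: power2_eq_square algebra_simps)
    also have "\<dots> = 0" using S2 Q_def by (simp add: algebra_simps)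
    finally have e: "2*(M-b)*(2*(1-\<alpha>))^2 + A*(2*(1-\<alpha>))*(A+S) - (1-\<alpha>)*(A+S)^2 = 0" .
    define x where "x = r0 b M \<alpha>"
    have xD: "x*(A+S) = 2*(1-\<alpha>)" unfolding x_def r using pos by simp
    have "(A+S)^2 * (2*(M-b)*x^2 + A*x - (1-\<alpha>)) = 2*(M-b)*(x*(A+S))^2 + A*(x*(A+S))*(A+S) - (1-\<alpha>)*(A+S)^2"
      by (simp add: algebra_simps power2_eq_square)
    also have "\<dots> = 0" unfolding xD using e by simp
    finally show ?thesis using pos unfolding x_def by simp
  qed
  ultimately show ?thesis unfolding A_def by simp
qed

theorem theorem4p1:
  fixes b M \<alpha> :: real and p :: "complex \<Rightarrow> complex" and c :: "nat \<Rightarrow> complex"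
  assumes "b \<ge> 0" and "M > 0" and "0 \<le> \<alpha>" and "\<alpha> < 1"
    and "p holomorphic_on ball 0 1"
    and "c 0 = 1"
    and "\<forall>z\<in>ball 0 1. (\<lambda>n. c n * z ^ n) sums p z"
    and "norm (c 1) = 2 * b"
    and "\<forall>n\<ge>2. norm (c n) \<le> 2 * M"
  shows "(\<forall>z. norm z \<le> r0 b M \<alpha> \<longrightarrow> norm (p z - 1) \<le> 1 - \<alpha>)
    \<and> (\<forall>z. norm z < r0 b M \<alpha> \<longrightarrow> Re (p z) > \<alpha>)
    \<and> (p0 b M holomorphic_on ball 0 1
       \<and> (\<exists>d :: nat \<Rightarrow> complex. d 0 = 1 \<and> norm (d 1) = 2 * b
            \<and> (\<forall>n\<ge>2. norm (d n) \<le> 2 * M)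
            \<and> (\<forall>z\<in>ball 0 1. (\<lambda>n. d n * z ^ n) sums p0 b M z))
       \<and> p0 b M (of_real (r0 b M \<alpha>)) = of_real \<alpha>
       \<and> norm (p0 b M (of_real (r0 b M \<alpha>)) - 1) = 1 - \<alpha>)"
proof -
  define r where "r = r0 b M \<alpha>"
  have rf: "0 < r" "r < 1" "2*(M-b)*r^2 + (1-\<alpha>+2*b)*r - (1-\<alpha>) = 0"
    using r0_facts[OF assms(1,2,4)] unfolding r_def by auto
  define f where "f t = 2*b*t + 2*M*t^2/(1-t)" for t :: real
  have fr: "f r = 1 - \<alpha>"
  proof -
    have "2*M*r^2 = (1-r)*((1-\<alpha>) - 2*b*r)" using rf(3) by (simp add: algebra_simps power2_eq_square)
    hence "2*M*r^2/(1-r) = (1-\<alpha>) - 2*b*r" using rf by (simp add: field_simps)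
    thus ?thesis unfolding f_def by simp
  qed
  have bound: "norm (p z - 1) \<le> f (norm z)" if z: "norm z < 1" for z
  proof -
    define t where "t = norm z"
    have t: "0 \<le> t" "t < 1" using z t_def by auto
    have s: "(\<lambda>n. c n * z ^ n) sums p z" using assms(7) z by simp
    have s2: "(\<lambda>i. c (i+2) * z^(i+2)) sums (p z - (\<Sum>i<2. c i * z^i))"
      using s sums_iff_shift'[of "\<lambda>n. c n * z ^ n" 2 "p z"] by simp
    have g: "(\<lambda>i. 2*M*t^2 * t^i) sums (2*M*t^2 * (1/(1-t)))"
      using sums_mult[OF geometric_sums[of t]] t by simp
    have "norm (p z - (\<Sum>i<2. c i * z^i)) \<le> 2*M*t^2 * (1/(1-t))"
    proof (rule norm_sums_le[OF s2 g])
      fix n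
      have "norm (c (n+2) * z^(n+2)) = norm (c (n+2)) * t^(n+2)"
        by (simp add: norm_mult norm_power t_def)
      also have "\<dots> \<le> 2*M * t^(n+2)"
        using assms(9) t by (intro mult_right_mono) auto
      finally show "norm (c (n+2) * z^(n+2)) \<le> 2*M*t^2 * t^n" by (simp add: power_add power2_eq_square mult.assoc)
    qed
    hence h: "norm (p z - 1 - c 1 * z) \<le> 2*M*t^2/(1-t)"
      using assms(6) by (simp add: numeral_2_eq_2 diff_diff_eq)
    have "norm (p z - 1) \<le> norm (p z - 1 - c 1 * z) + norm (c 1 * z)"
      by (metis diff_add_cancel norm_triangle_ineq)
    also have "norm (c 1 * z) = 2*b*t" using assms(8) by (simp add: norm_mult t_def)
    finally show ?thesis using h unfolding f_def t_def by simp
  qed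
  have fmono: "f t \<le> f r" if "0 \<le> t" "t \<le> r" for t
  proof -
    have "t^2/(1-t) \<le> r^2/(1-r)"
      using that rf by (intro frac_le power_mono) auto
    hence "M*(t^2/(1-t)) \<le> M*(r^2/(1-r))" using assms(2) by (intro mult_left_mono) auto
    moreover have "b*t \<le> b*r" using that assms(1) by (simp add: mult_left_mono)
    ultimately show ?thesis unfolding f_def by simp
  qed
  have fsmono: "f t < f r" if "0 \<le> t" "t < r" for t
  proof -
    have "t^2/(1-t) < r^2/(1-r)"
    proof -
      have "t^2/(1-t) \<le> t^2/(1-r)" using that rf by (intro frac_le) auto
      also have "\<dots> < r^2/(1-r)" using that rf by (intro divide_strict_right_mono power_strict_mono) auto
      finally show ?thesis .
    qed
    hence "M*(t^2/(1-t)) < M*(r^2/(1-r))" using assms(2) by (intro mult_strict_left_mono) auto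
    moreover have "b*t \<le> b*r" using that assms(1) by (simp add: mult_left_mono)
    ultimately show ?thesis unfolding f_def by simp
  qed
  have P1: "\<forall>z. norm z \<le> r \<longrightarrow> norm (p z - 1) \<le> 1 - \<alpha>"
  proof (intro allI impI)
    fix z :: complex assume "norm z \<le> r"
    thus "norm (p z - 1) \<le> 1 - \<alpha>" using bound[of z] fmono[of "norm z"] fr rf by simp
  qed
  have P2: "\<forall>z. norm z < r \<longrightarrow> Re (p z) > \<alpha>"
  proof (intro allI impI)
    fix z :: complex assume a: "norm z < r"
    have "norm (p z - 1) < 1 - \<alpha>" using bound[of z] fsmono[of "norm z"] fr rf a by simp
    moreover have "Re (p z - 1) \<ge> - norm (p z - 1)" using abs_Re_le_cmod[of "p z - 1"] by linarith
    ultimately show "Re (p z) > \<alpha>" by simp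
  qed
  have H: "p0 b M holomorphic_on ball 0 1"
    unfolding p0_def by (intro holomorphic_intros) auto
  define d :: "nat \<Rightarrow> complex" where "d n = (if n = 0 then 1 else if n = 1 then - 2* of_real b else - 2* of_real M)" for n
  have D: "d 0 = 1 \<and> norm (d 1) = 2 * b \<and> (\<forall>n\<ge>2. norm (d n) \<le> 2 * M)
            \<and> (\<forall>z\<in>ball 0 1. (\<lambda>n. d n * z ^ n) sums p0 b M z)"
  proof (intro conjI allI impI ballI)
    show "d 0 = 1" by (simp add: d_def)
    show "norm (d 1) = 2*b" using assms(1) by (simp add: d_def norm_mult)
    fix n :: nat assume "n \<ge> 2" thus "norm (d n) \<le> 2*M" using assms(2) by (simp add: d_def norm_mult)
  next
    fix z :: complex assume "z \<in> ball 0 1"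
    hence z: "norm z < 1" by simp
    have g: "(\<lambda>i. (-2* of_real M*z^2) * z^i) sums ((-2* of_real M*z^2) * (1/(1-z)))"
      using sums_mult[OF geometric_sums[OF z], of "-2* of_real M*z^2"] by simp
    have e: "(\<lambda>i. d (i+2) * z^(i+2)) = (\<lambda>i. (-2* of_real M*z^2) * z^i)"
      by (auto simp: d_def power_add power2_eq_square mult.assoc)
    have "(\<lambda>n. d n * z^n) sums ((-2* of_real M*z^2) * (1/(1-z)) + (\<Sum>i<2. d i * z^i))"
      using g e sums_iff_shift[of "\<lambda>n. d n * z ^ n" 2] by simp
    moreover have "(-2* of_real M*z^2) * (1/(1-z)) + (\<Sum>i<2. d i * z^i) = p0 b M z"
      by (simp add: p0_def d_def numeral_2_eq_2)
    ultimately show "(\<lambda>n. d n * z^n) sums p0 b M z" by simp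
  qed
  have pr: "p0 b M (of_real r) = of_real (1 - f r)"
    unfolding p0_def f_def by simp
  have V: "p0 b M (of_real r) = of_real \<alpha>" using pr fr by simp
  have N: "norm (p0 b M (of_real r) - 1) = 1 - \<alpha>"
  proof -
    have "p0 b M (of_real r) - 1 = of_real (\<alpha> - 1)" using V by simp
    hence "norm (p0 b M (of_real r) - 1) = \<bar>\<alpha> - 1\<bar>" by (metis norm_of_real)
    thus ?thesis using assms(4) by simp
  qed
  show ?thesis using P1 P2 H D V N unfolding r_def by blast
qed

end
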